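(* Let $G=(V,E)$ be an event graph. There exists a unique sink component $\mathcal C$ of $\mathrm{dec}(G)$ such that for every $v\in V$, $\mathcal C$ is the only sink component of $\mathrm{dec}(G)$ that is reachable (by a directed walk) from the node $(v,\emptyset)$.
   Context: An event graph is a finite, connected, undirected graph $G=(V,E)$, with $n=|V|$, in which every node $v$ carries a label that is either $\mathtt{i}x_v$ (insertion of $x_v$) or $\mathtt{d}x_v$ (deletion of $x_v$), where $x_v$ is an element of a finite universe $\mathcal U$. Write $\mathcal U_{|V}=\{x_v : v\in V\}$. It is assumed that for each $x\in\mathcal U_{|V}$ at least one node is labeled $\mathtt{i}x$ and at least one node is labeled $\mathtt{d}x$. The decorated graph $\mathrm{dec}(G)$ is the directed graph with vertex set $V\times 2^{\mathcal U_{|V}}$ in which $((u,X),(v,Y))$ is an edge if and only if $\{u,v\}\in E$ and $Y=X\cup\{x_v\}$ when $v$ is labeled $\mathtt{i}x_v$, respectively $Y=X\setminus\{x_v\}$ when $v$ is labeled $\mathtt{d}x_v$. A sink component of $\mathrm{dec}(G)$ is a strongly connected component of $\mathrm{dec}(G)$ from which no edge leads to a different strongly connected component. *)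

theory Defs
  imports Main
begin

datatype 'u event = Ins 'u | Del 'u

fun elem :: "'u event \<Rightarrow> 'u" where
  "elem (Ins a) = a"
| "elem (Del a) = a"

definition adj :: "'v set set \<Rightarrow> ('v \<times> 'v) set" where
  "adj E = {(u, v). {u, v} \<in> E}"

definition univ_V :: "'v set \<Rightarrow> ('v \<Rightarrow> 'u event) \<Rightarrow> 'u set" where
  "univ_V V lab = elem ` lab ` V"

definition event_graph :: "'v set \<Rightarrow> 'v set set \<Rightarrow> ('v \<Rightarrow> 'u event) \<Rightarrow> bool" where
  "event_graph V E lab \<longleftrightarrow>
     finite V \<and> V \<noteq> {} \<and>
     (\<forall>e\<in>E. \<exists>u v. u \<in> V \<and> v \<in> V \<and> u \<noteq> v \<and> e = {u, v}) \<and>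
     (\<forall>u\<in>V. \<forall>v\<in>V. (u, v) \<in> (adj E)\<^sup>*) \<and>
     (\<forall>y\<in>univ_V V lab. (\<exists>v\<in>V. lab v = Ins y) \<and> (\<exists>v\<in>V. lab v = Del y))"

fun apply_event :: "'u event \<Rightarrow> 'u set \<Rightarrow> 'u set" where
  "apply_event (Ins a) X = insert a X"
| "apply_event (Del a) X = X - {a}"

definition dec_vertices :: "'v set \<Rightarrow> ('v \<Rightarrow> 'u event) \<Rightarrow> ('v \<times> 'u set) set" where
  "dec_vertices V lab = V \<times> Pow (univ_V V lab)"

definition dec_edges :: "'v set \<Rightarrow> 'v set set \<Rightarrow> ('v \<Rightarrow> 'u event) \<Rightarrow> (('v \<times> 'u set) \<times> ('v \<times> 'u set)) set" where
  "dec_edges V E lab =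
     {((u, X), (v, Y)). (u, X) \<in> dec_vertices V lab \<and> (v, Y) \<in> dec_vertices V lab \<and>
        {u, v} \<in> E \<and> Y = apply_event (lab v) X}"

definition scc :: "'a set \<Rightarrow> ('a \<times> 'a) set \<Rightarrow> 'a set \<Rightarrow> bool" where
  "scc W R C \<longleftrightarrow> C \<noteq> {} \<and> C \<subseteq> W \<and>
     (\<forall>a\<in>C. \<forall>b\<in>C. (a, b) \<in> R\<^sup>* ) \<and>
     (\<forall>a\<in>C. \<forall>b\<in>W. (a, b) \<in> R\<^sup>* \<and> (b, a) \<in> R\<^sup>* \<longrightarrow> b \<in> C)"

definition sink_component :: "'a set \<Rightarrow> ('a \<times> 'a) set \<Rightarrow> 'a set \<Rightarrow> bool" where
  "sink_component W R C \<longleftrightarrow> scc W R C \<and> (\<forall>a\<in>C. \<forall>b. (a, b) \<in> R \<longrightarrow> b \<in> C)"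

definition reaches :: "('a \<times> 'a) set \<Rightarrow> 'a \<Rightarrow> 'a set \<Rightarrow> bool" where
  "reaches R a C \<longleftrightarrow> (\<exists>c\<in>C. (a, c) \<in> R\<^sup>* )"

end

theory Submission
  imports Defs
begin

fun walk :: "('v \<times> 'v) set \<Rightarrow> 'v \<Rightarrow> 'v list \<Rightarrow> bool" where
  "walk R u [] = True"
| "walk R u (v # vs) = ((u, v) \<in> R \<and> walk R v vs)"

lemma walk_append: "walk R u (xs @ ys) = (walk R u xs \<and> walk R (last (u # xs)) ys)"
  by (induction xs arbitrary: u) auto

lemma rtrancl_walk:
  assumes "(a, b) \<in> R\<^sup>*" shows "\<exists>ws. walk R a ws \<and> last (a # ws) = b"
  using assms
proof (induction rule: rtrancl_induct)
  case base
  then show ?case by (intro exI[of _ "[]"]) auto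
next
  case (step y z)
  then obtain ws where "walk R a ws" "last (a # ws) = y" by blast
  then show ?case using step(2) by (intro exI[of _ "ws @ [z]"]) (simp add: walk_append)
qed

definition run :: "('v \<Rightarrow> 'u event) \<Rightarrow> 'u set \<Rightarrow> 'v list \<Rightarrow> 'u set" where
  "run lab X ws = fold (\<lambda>v Y. apply_event (lab v) Y) ws X"

lemma run_Nil[simp]: "run lab X [] = X" by (simp add: run_def)
lemma run_Cons[simp]: "run lab X (v # ws) = run lab (apply_event (lab v) X) ws"
  by (simp add: run_def)
lemma run_append: "run lab X (xs @ ys) = run lab (run lab X xs) ys"
  by (simp add: run_def)

lemma run_split: "run lab X ws = (X - elem ` lab ` set ws) \<union> run lab {} ws"
proof (induction ws arbitrary: X)
  case Nil then show ?case by simp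
next
  case (Cons v ws)
  show ?case
  proof (cases "lab v")
    case (Ins e)
    show ?thesis using Cons.IH[of "insert e X"] Cons.IH[of "{e}"] Ins by auto
  next
    case (Del e)
    show ?thesis using Cons.IH[of "X - {e}"] Cons.IH[of "{}"] Del by auto
  qed
qed

lemma edge_in_V:
  assumes "event_graph V E lab" "(u, v) \<in> adj E" shows "u \<in> V" "v \<in> V"
proof -
  from assms(2) have "{u, v} \<in> E" by (simp add: adj_def)
  with assms(1) obtain a b where "a \<in> V" "b \<in> V" "{u, v} = {a, b}"
    unfolding event_graph_def by blast
  then show "u \<in> V" "v \<in> V" by (auto simp: doubleton_eq_iff)
qed

lemma apply_sub:
  assumes "v \<in> V" "X \<subseteq> univ_V V lab" shows "apply_event (lab v) X \<subseteq> univ_V V lab"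
proof -
  have "elem (lab v) \<in> univ_V V lab" using assms(1) by (simp add: univ_V_def)
  then show ?thesis using assms(2) by (cases "lab v") auto
qed

lemma walk_props:
  assumes "event_graph V E lab" "walk (adj E) u ws" "u \<in> V" "X \<subseteq> univ_V V lab"
  shows "last (u # ws) \<in> V \<and> run lab X ws \<subseteq> univ_V V lab \<and>
         ((u, X), (last (u # ws), run lab X ws)) \<in> (dec_edges V E lab)\<^sup>*"
  using assms(2-4)
proof (induction ws arbitrary: u X)
  case Nil then show ?case by simp
next
  case (Cons v ws)
  have uv: "(u, v) \<in> adj E" using Cons.prems by simp
  have vV: "v \<in> V" using edge_in_V[OF assms(1) uv] by simp
  have Y: "apply_event (lab v) X \<subseteq> univ_V V lab" using apply_sub[OF vV Cons.prems(3)] .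
  have IH: "last (v # ws) \<in> V \<and> run lab (apply_event (lab v) X) ws \<subseteq> univ_V V lab \<and>
         ((v, apply_event (lab v) X), (last (v # ws), run lab (apply_event (lab v) X) ws)) \<in> (dec_edges V E lab)\<^sup>*"
    using Cons.IH[of v "apply_event (lab v) X"] Cons.prems vV Y by simp
  have e: "((u, X), (v, apply_event (lab v) X)) \<in> dec_edges V E lab"
    using uv Cons.prems vV Y by (auto simp: dec_edges_def dec_vertices_def adj_def)
  show ?case using IH e by (auto intro: converse_rtrancl_into_rtrancl)
qed

lemma neighbor:
  assumes "event_graph V E lab" "a \<in> V" shows "\<exists>n. (a, n) \<in> adj E \<and> (n, a) \<in> adj E"
proof -
  let ?y = "elem (lab a)"
  have "?y \<in> univ_V V lab" using assms(2) by (simp add: univ_V_def)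
  then obtain p q where p: "p \<in> V" "lab p = Ins ?y" and q: "q \<in> V" "lab q = Del ?y"
    using assms(1) unfolding event_graph_def by blast
  have "p \<noteq> q" using p q by auto
  then obtain b where b: "b \<in> V" "b \<noteq> a"
  proof (cases "p = a")
    case True
    then show ?thesis using that[of q] q \<open>p \<noteq> q\<close> by simp
  next
    case False
    then show ?thesis using that[of p] p by simp
  qed
  have "(a, b) \<in> (adj E)\<^sup>*" using assms b unfolding event_graph_def by blast
  then obtain n where "(a, n) \<in> adj E" using b(2) by (auto elim: converse_rtranclE)
  moreover then have "(n, a) \<in> adj E" by (simp add: adj_def insert_commute)
  ultimately show ?thesis by blast
qed

lemma nonempty_path:
  assumes "event_graph V E lab" "a \<in> V" "b \<in> V"
  shows "\<exists>ps. walk (adj E) a ps \<and> ps \<noteq> [] \<and> last ps = b"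
proof (cases "a = b")
  case True
  obtain n where n: "(a, n) \<in> adj E" "(n, a) \<in> adj E" using neighbor[OF assms(1,2)] by blast
  have "walk (adj E) a [n, a]" using n by simp
  then show ?thesis using True by (intro exI[of _ "[n, a]"]) simp
next
  case False
  have conn: "\<forall>u\<in>V. \<forall>v\<in>V. (u, v) \<in> (adj E)\<^sup>*" using assms(1) unfolding event_graph_def by blast
  have ab: "(a, b) \<in> (adj E)\<^sup>*" using conn assms(2,3) by blast
  obtain ws where ws: "walk (adj E) a ws" "last (a # ws) = b" using rtrancl_walk[OF ab] by blast
  have "ws \<noteq> []" using ws(2) False by auto
  moreover then have "last ws = b" using ws(2) by simp
  ultimately show ?thesis using ws(1) by blast
qed

lemma cover_walk:
  assumes "event_graph V E lab" "w0 \<in> V" "finite S"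
  shows "S \<subseteq> V \<Longrightarrow> \<exists>ws. walk (adj E) w0 ws \<and> S \<subseteq> set ws"
  using assms(3)
proof (induction S rule: finite_induct)
  case empty then show ?case by (intro exI[of _ "[]"]) simp
next
  case (insert x S)
  have "S \<subseteq> V" using insert.prems by simp
  then obtain ws where ws: "walk (adj E) w0 ws" "S \<subseteq> set ws" using insert.IH by blast
  have eV: "last (w0 # ws) \<in> V" using walk_props[OF assms(1) ws(1) assms(2), of "{}"] by simp
  have xV: "x \<in> V" using insert.prems by simp
  obtain ps where ps: "walk (adj E) (last (w0 # ws)) ps" "ps \<noteq> []" "last ps = x"
    using nonempty_path[OF assms(1) eV xV] by blast
  have "x \<in> set ps" using ps(2,3) last_in_set by metis
  then have "insert x S \<subseteq> set (ws @ ps)" using ws(2) by auto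
  moreover have "walk (adj E) w0 (ws @ ps)" using ws(1) ps(1) by (simp add: walk_append)
  ultimately show ?case by blast
qed

lemma generic:
  assumes RW: "R \<subseteq> W \<times> W" and z0: "z0 \<in> W" and all: "\<forall>a\<in>W. (a, z0) \<in> R\<^sup>*"
    and I: "I \<noteq> {}" and f: "\<forall>v\<in>I. f v \<in> W"
  shows "\<exists>!C. sink_component W R C \<and>
           (\<forall>v\<in>I. reaches R (f v) C \<and>
              (\<forall>C'. sink_component W R C' \<and> reaches R (f v) C' \<longrightarrow> C' = C))"
proof -
  define T where "T = {b. (z0, b) \<in> R\<^sup>*}"
  have TW: "T \<subseteq> W"
  proof
    fix b assume "b \<in> T"
    then have "(z0, b) \<in> R\<^sup>*" by (simp add: T_def)
    then show "b \<in> W" by (induction rule: rtrancl_induct) (use z0 RW in auto)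
  qed
  have sinkT: "sink_component W R T"
    unfolding sink_component_def scc_def
  proof (intro conjI ballI impI allI)
    show "T \<noteq> {}" by (auto simp: T_def)
    show "T \<subseteq> W" by (rule TW)
    fix a assume a: "a \<in> T"
    { fix b assume b: "b \<in> T"
      have "a \<in> W" using a TW by blast
      then have "(a, z0) \<in> R\<^sup>*" using all by blast
      moreover have "(z0, b) \<in> R\<^sup>*" using b by (simp add: T_def)
      ultimately show "(a, b) \<in> R\<^sup>*" by (rule rtrancl_trans) }
    { fix b assume "b \<in> W" "(a, b) \<in> R\<^sup>* \<and> (b, a) \<in> R\<^sup>*"
      then show "b \<in> T" using a unfolding T_def by (blast intro: rtrancl_trans) }
    { fix b assume "(a, b) \<in> R" then show "b \<in> T" using a unfolding T_def
        by (simp add: rtrancl_into_rtrancl) }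
  qed
  have uniq: "C = T" if C: "sink_component W R C" for C
  proof -
    have Cscc: "scc W R C" and Cout: "\<forall>a\<in>C. \<forall>b. (a, b) \<in> R \<longrightarrow> b \<in> C"
      using C unfolding sink_component_def by auto
    have Cne: "C \<noteq> {}" and CW: "C \<subseteq> W" and Cm: "\<forall>a\<in>C. \<forall>b\<in>C. (a, b) \<in> R\<^sup>*"
      using Cscc unfolding scc_def by auto
    have closed: "b \<in> C" if "c \<in> C" "(c, b) \<in> R\<^sup>*" for c b
      using that(2,1)
    proof (induction rule: rtrancl_induct)
      case base then show ?case .
    next
      case (step y z) then show ?case using Cout by blast
    qed
    obtain c where c: "c \<in> C" using Cne by blast
    have "c \<in> W" using CW c by blast
    then have "(c, z0) \<in> R\<^sup>*" using all by blast
    then have z0C: "z0 \<in> C" using closed[OF c] by blast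
    show ?thesis
    proof
      show "C \<subseteq> T"
      proof
        fix b assume "b \<in> C"
        then have "(z0, b) \<in> R\<^sup>*" using Cm z0C by blast
        then show "b \<in> T" by (simp add: T_def)
      qed
      show "T \<subseteq> C" using closed[OF z0C] by (auto simp: T_def)
    qed
  qed
  have reachT: "reaches R (f v) T" if "v \<in> I" for v
  proof -
    have "(f v, z0) \<in> R\<^sup>*" using that f all by blast
    then show ?thesis unfolding reaches_def T_def by blast
  qed
  show ?thesis
  proof (rule ex1I[of _ T])
    show "sink_component W R T \<and> (\<forall>v\<in>I. reaches R (f v) T \<and>
              (\<forall>C'. sink_component W R C' \<and> reaches R (f v) C' \<longrightarrow> C' = T))"
    proof (intro conjI ballI allI impI)
      show "sink_component W R T" by (rule sinkT)
      fix v assume "v \<in> I"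
      then show "reaches R (f v) T" by (rule reachT)
      fix C' assume "sink_component W R C' \<and> reaches R (f v) C'"
      then show "C' = T" using uniq by blast
    qed
  next
    fix C assume "sink_component W R C \<and> (\<forall>v\<in>I. reaches R (f v) C \<and>
              (\<forall>C'. sink_component W R C' \<and> reaches R (f v) C' \<longrightarrow> C' = C))"
    then have "sink_component W R C" by blast
    then show "C = T" by (rule uniq)
  qed
qed

theorem mainTheorem2:
  fixes V :: "'v set" and E :: "'v set set" and lab :: "'v \<Rightarrow> 'u event"
  assumes "event_graph V E lab"
  shows "\<exists>!C. sink_component (dec_vertices V lab) (dec_edges V E lab) C \<and>
           (\<forall>v\<in>V. reaches (dec_edges V E lab) (v, {}) C \<and>
              (\<forall>C'. sink_component (dec_vertices V lab) (dec_edges V E lab) C' \<and>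
                    reaches (dec_edges V E lab) (v, {}) C' \<longrightarrow> C' = C))"
proof -
  have ev: "event_graph V E lab" by fact
  have fin: "finite V" and ne: "V \<noteq> {}" using ev by (auto simp: event_graph_def)
  obtain w0 where w0: "w0 \<in> V" using ne by blast
  obtain ws0 where ws0: "walk (adj E) w0 ws0" "V \<subseteq> set ws0"
    using cover_walk[OF ev w0 fin order_refl] by blast
  define z0 where "z0 = (last (w0 # ws0), run lab {} ws0)"
  note P0 = walk_props[OF ev ws0(1) w0 empty_subsetI]
  have z0W: "z0 \<in> dec_vertices V lab" using P0 by (simp add: z0_def dec_vertices_def)
  have all: "\<forall>a\<in>dec_vertices V lab. (a, z0) \<in> (dec_edges V E lab)\<^sup>*"
  proof
    fix a assume "a \<in> dec_vertices V lab"
    then obtain u X where a: "a = (u, X)" "u \<in> V" "X \<subseteq> univ_V V lab"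
      by (auto simp: dec_vertices_def)
    have conn: "\<forall>u\<in>V. \<forall>v\<in>V. (u, v) \<in> (adj E)\<^sup>*" using ev unfolding event_graph_def by blast
    have uw: "(u, w0) \<in> (adj E)\<^sup>*" using conn a(2) w0 by blast
    obtain ps where ps: "walk (adj E) u ps" "last (u # ps) = w0" using rtrancl_walk[OF uw] by blast
    note P1 = walk_props[OF ev ps(1) a(2,3)]
    let ?Y = "run lab X ps"
    have Y: "?Y \<subseteq> univ_V V lab" using P1 by simp
    note P2 = walk_props[OF ev ws0(1) w0 Y]
    have sub: "?Y \<subseteq> elem ` lab ` set ws0" using Y ws0(2) unfolding univ_V_def by blast
    have "run lab ?Y ws0 = (?Y - elem ` lab ` set ws0) \<union> run lab {} ws0" by (rule run_split)
    also have "?Y - elem ` lab ` set ws0 = {}" using sub by blast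
    finally have eq: "run lab ?Y ws0 = run lab {} ws0" by simp
    have r1: "((u, X), (w0, ?Y)) \<in> (dec_edges V E lab)\<^sup>*" using P1 ps(2) by simp
    have r2: "((w0, ?Y), z0) \<in> (dec_edges V E lab)\<^sup>*" using P2 eq unfolding z0_def by simp
    show "(a, z0) \<in> (dec_edges V E lab)\<^sup>*" using rtrancl_trans[OF r1 r2] a(1) by simp
  qed
  have RW: "dec_edges V E lab \<subseteq> dec_vertices V lab \<times> dec_vertices V lab"
    by (auto simp: dec_edges_def)
  have f: "\<forall>v\<in>V. (v, {}) \<in> dec_vertices V lab" by (auto simp: dec_vertices_def)
  show ?thesis using generic[OF RW z0W all ne f] .
qed

end
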